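(* Let $R=R(\dot R,S,L)$ be an extended affine root system, let $U$ be a subgroup of $\langle R^0\rangle$, $T=(\dot R+U)\cap R^\times$, and $\tilde S=S\cap U$. Then $T=(\dot R+\tilde S)\cap R^\times=\tilde R^\times_T$ and $\tilde R^0_T=\tilde S+\tilde S$.
   Context: An extended affine root system (EARS) is a triple $(R,(\cdot,\cdot),\mathcal V)$ with $\mathcal V$ a finite-dimensional real vector space, $(\cdot,\cdot)$ symmetric positive semidefinite, $R\subseteq\mathcal V$, such that with $R^\times=\{\alpha\in R:(\alpha,\alpha)\ne0\}$, $R^0=R\setminus R^\times$: $0\in R$; $R=-R$; $R$ spans $\mathcal V$; $\alpha\in R^\times\Rightarrow2\alpha\notin R$; $R$ discrete; for $\alpha\in R^\times,\beta\in R$ there are integers $d,u\ge0$ with $(\beta+\mathbb Z\alpha)\cap R=\{\beta-d\alpha,\dots,\beta+u\alpha\}$ and $2(\beta,\alpha)/(\alpha,\alpha)=d-u$; isotropic roots are non-isolated; $R^\times$ is connected. Let $\mathcal V^0=\mathrm{span}_{\mathbb R}R^0$; root systems are assumed reduced. $\langle X\rangle$ is the additive subgroup generated by $X$. Structure: there are a finite root system $\dot R\subseteq R$ (containing $0$, mapped bijectively onto the finite root system $R$ modulo $\mathcal V^0$) and semilattices $S,L\subseteq\mathcal V^0$ with $R=(S+S)\cup(\dot R_{sh}+S)\cup(\dot R_{lg}+L)$, $R^0=S+S$, where $\dot R_{sh},\dot R_{lg}$ are the nonzero short/long roots of $\dot R$ (all nonzero roots short if simply laced); written $R=R(\dot R,S,L)$.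 A semilattice $S$ in $\Lambda=\langle S\rangle$ has the form $S=\bigcup_{i=0}^m(\tau_i+2\Lambda)$ with $\tau_0=0$ and $\tau_i$ representatives of distinct cosets of $2\Lambda$. For a subset $T\subseteq R^\times$: $\tilde R_T^\times=\langle T\rangle\cap R^\times$, $\tilde R_T^0=\mathcal V^0\cap(\tilde R_T^\times-\tilde R_T^\times)$. *)

theory Defs
  imports "HOL-Analysis.Analysis"
begin

inductive_set addgen :: "'a::ab_group_add set \<Rightarrow> 'a set" for X where
  zero: "0 \<in> addgen X"
| base: "x \<in> X \<Longrightarrow> x \<in> addgen X"
| add: "x \<in> addgen X \<Longrightarrow> y \<in> addgen X \<Longrightarrow> x + y \<in> addgen X"
| neg: "x \<in> addgen X \<Longrightarrow> - x \<in> addgen X"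

definition is_subgroup :: "'a::ab_group_add set \<Rightarrow> bool" where
  "is_subgroup U \<longleftrightarrow> 0 \<in> U \<and> (\<forall>x\<in>U. \<forall>y\<in>U. x + y \<in> U) \<and> (\<forall>x\<in>U. - x \<in> U)"

definition msum :: "'a::plus set \<Rightarrow> 'a set \<Rightarrow> 'a set" where
  "msum A B = {a + b | a b. a \<in> A \<and> b \<in> B}"

definition nonisot :: "('a \<Rightarrow> 'a \<Rightarrow> real) \<Rightarrow> 'a set \<Rightarrow> 'a set" where
  "nonisot B R = {a \<in> R. B a a \<noteq> 0}"

definition isot :: "('a \<Rightarrow> 'a \<Rightarrow> real) \<Rightarrow> 'a set \<Rightarrow> 'a set" where
  "isot B R = R - nonisot B R"

definition V0 :: "('a::real_vector \<Rightarrow> 'a \<Rightarrow> real) \<Rightarrow> 'a set \<Rightarrow> 'a set" where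
  "V0 B R = span (isot B R)"

text \<open>Extended affine root system (R, B, V) with V the whole (finite-dimensional) space.\<close>
definition ears :: "('a::euclidean_space \<Rightarrow> 'a \<Rightarrow> real) \<Rightarrow> 'a set \<Rightarrow> bool" where
  "ears B R \<longleftrightarrow>
     bilinear B \<and> (\<forall>x y. B x y = B y x) \<and> (\<forall>x. 0 \<le> B x x) \<and>
     0 \<in> R \<and> uminus ` R = R \<and> span R = UNIV \<and>
     (\<forall>a\<in>nonisot B R. 2 *\<^sub>R a \<notin> R) \<and>
     (\<forall>x\<in>R. \<exists>e>0. \<forall>y\<in>R. dist x y < e \<longrightarrow> y = x) \<and>
     (\<forall>a\<in>nonisot B R. \<forall>b\<in>R. \<exists>d u :: nat.
         {k::int. b + of_int k *\<^sub>R a \<in> R} = {- int d .. int u} \<and>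
         2 * B b a / B a a = real d - real u) \<and>
     (\<forall>a\<in>isot B R. \<exists>b\<in>nonisot B R. a + b \<in> R) \<and>
     (\<forall>R1 R2. R1 \<union> R2 = nonisot B R \<and> R1 \<inter> R2 = {} \<and>
         (\<forall>x\<in>R1. \<forall>y\<in>R2. B x y = 0) \<longrightarrow> R1 = {} \<or> R2 = {})"

definition finite_root_system :: "('a::real_vector \<Rightarrow> 'a \<Rightarrow> real) \<Rightarrow> 'a set \<Rightarrow> bool" where
  "finite_root_system B Rd \<longleftrightarrow>
     finite Rd \<and> 0 \<in> Rd \<and> uminus ` Rd = Rd \<and>
     (\<forall>x\<in>span Rd. x \<noteq> 0 \<longrightarrow> 0 < B x x) \<and>
     (\<forall>a\<in>Rd - {0}. \<forall>b\<in>Rd. b - (2 * B b a / B a a) *\<^sub>R a \<in> Rd \<and>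
         2 * B b a / B a a \<in> \<int>) \<and>
     (\<forall>a\<in>Rd - {0}. 2 *\<^sub>R a \<notin> Rd)"

text \<open>Short and long nonzero roots of the finite root system (all short if simply laced).\<close>
definition short_roots :: "('a::zero \<Rightarrow> 'a \<Rightarrow> real) \<Rightarrow> 'a set \<Rightarrow> 'a set" where
  "short_roots B Rd = {a \<in> Rd - {0}. \<forall>b\<in>Rd - {0}. B a a \<le> B b b}"

definition long_roots :: "('a::zero \<Rightarrow> 'a \<Rightarrow> real) \<Rightarrow> 'a set \<Rightarrow> 'a set" where
  "long_roots B Rd = (Rd - {0}) - short_roots B Rd"

definition semilattice :: "'a::ab_group_add set \<Rightarrow> bool" where
  "semilattice S \<longleftrightarrow> (\<exists>\<tau>s. finite \<tau>s \<and> 0 \<in> \<tau>s \<and>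
      (\<forall>t1\<in>\<tau>s. \<forall>t2\<in>\<tau>s. t1 - t2 \<in> {x + x | x. x \<in> addgen S} \<longrightarrow> t1 = t2) \<and>
      S = (\<Union>t\<in>\<tau>s. {t + (x + x) | x. x \<in> addgen S}))"

definition ears_structure ::
  "('a::euclidean_space \<Rightarrow> 'a \<Rightarrow> real) \<Rightarrow> 'a set \<Rightarrow> 'a set \<Rightarrow> 'a set \<Rightarrow> 'a set \<Rightarrow> bool" where
  "ears_structure B R Rd S L \<longleftrightarrow>
     finite_root_system B Rd \<and> Rd \<subseteq> R \<and>
     (\<forall>a\<in>R. \<exists>!b. b \<in> Rd \<and> a - b \<in> V0 B R) \<and>
     semilattice S \<and> semilattice L \<and> S \<subseteq> V0 B R \<and> L \<subseteq> V0 B R \<and>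
     R = msum S S \<union> msum (short_roots B Rd) S \<union> msum (long_roots B Rd) L \<and>
     isot B R = msum S S"

definition tR_x :: "('a::ab_group_add \<Rightarrow> 'a \<Rightarrow> real) \<Rightarrow> 'a set \<Rightarrow> 'a set \<Rightarrow> 'a set" where
  "tR_x B R T = addgen T \<inter> nonisot B R"

definition tR_0 :: "('a::euclidean_space \<Rightarrow> 'a \<Rightarrow> real) \<Rightarrow> 'a set \<Rightarrow> 'a set \<Rightarrow> 'a set" where
  "tR_0 B R T = V0 B R \<inter> {x - y | x y. x \<in> tR_x B R T \<and> y \<in> tR_x B R T}"

end

theory Submission imports Defs begin
lemma ears_D:
  assumes "ears B R"
  shows "bilinear B" "\<forall>x y. B x y = B y x" "\<forall>x. 0 \<le> B x x" "0 \<in> R"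
    "\<forall>a\<in>nonisot B R. \<forall>b\<in>R. \<exists>d u :: nat.
         {k::int. b + of_int k *\<^sub>R a \<in> R} = {- int d .. int u} \<and>
         2 * B b a / B a a = real d - real u"
    "\<forall>a\<in>isot B R. \<exists>b\<in>nonisot B R. a + b \<in> R"
    "\<forall>R1 R2. R1 \<union> R2 = nonisot B R \<and> R1 \<inter> R2 = {} \<and>
         (\<forall>x\<in>R1. \<forall>y\<in>R2. B x y = 0) \<longrightarrow> R1 = {} \<or> R2 = {}"
  apply (insert assms[unfolded ears_def])
  apply (elim conjE, assumption)+
  done

lemma ears_structure_D:
  assumes "ears_structure B R Rd S L"
  shows "finite_root_system B Rd" "Rd \<subseteq> R" "\<forall>a\<in>R. \<exists>!b. b \<in> Rd \<and> a - b \<in> V0 B R"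
     "semilattice S" "semilattice L" "S \<subseteq> V0 B R" "L \<subseteq> V0 B R"
     "R = msum S S \<union> msum (short_roots B Rd) S \<union> msum (long_roots B Rd) L"
     "isot B R = msum S S"
  apply (insert assms[unfolded ears_structure_def])
  apply (elim conjE, assumption)+
  done

lemma frs_D:
  assumes "finite_root_system B Rd"
  shows "finite Rd" "\<forall>x\<in>span Rd. x \<noteq> 0 \<longrightarrow> 0 < B x x"
   "\<forall>a\<in>Rd - {0}. \<forall>b\<in>Rd. b - (2 * B b a / B a a) *\<^sub>R a \<in> Rd \<and>
         2 * B b a / B a a \<in> \<int>"
  apply (insert assms[unfolded finite_root_system_def])
  apply (elim conjE, assumption)+
  done

lemma psd_zero:
  fixes B :: "'a::real_vector \<Rightarrow> 'a \<Rightarrow> real"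
  assumes bl: "bilinear B" and sym: "\<forall>x y. B x y = B y x" and psd: "\<forall>x. 0 \<le> B x x"
    and xx: "B x x = 0"
  shows "B x y = 0"
proof (rule ccontr)
  assume h: "B x y \<noteq> 0"
  define b where "b = B x y"
  define c where "c = B y y"
  define t where "t = - b / (c+1)"
  have c0: "c \<ge> 0" using psd c_def by auto
  have "B (x + t *\<^sub>R y) (x + t *\<^sub>R y) = B x x + t * B x y + t * B y x + t*t* B y y"
    using bl by (simp add: bilinear_ladd bilinear_radd bilinear_lmul bilinear_rmul algebra_simps)
  also have "\<dots> = 2*t*b + t*t*c" using xx sym[rule_format, of y x] unfolding b_def c_def by simp
  also have "\<dots> = t*t*(-c-2)"
  proof -
    have "b = - t*(c+1)" unfolding t_def using c0 by (simp add: field_simps)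
    then show ?thesis by (simp only:) (simp add: algebra_simps)
  qed
  also have "\<dots> < 0"
  proof -
    have "t \<noteq> 0" unfolding t_def using h c0 unfolding b_def by (simp add: field_simps)
    then have "t*t > 0" by (metis not_real_square_gt_zero)
    then show ?thesis using c0 by (simp add: mult_pos_neg)
  qed
  finally have "B (x + t *\<^sub>R y) (x + t *\<^sub>R y) < 0" .
  moreover have "0 \<le> B (x + t *\<^sub>R y) (x + t *\<^sub>R y)" using psd by blast
  ultimately show False by linarith
qed

lemma cs_ineq:
  fixes B :: "'a::real_vector \<Rightarrow> 'a \<Rightarrow> real"
  assumes bl: "bilinear B" and sym: "\<forall>x y. B x y = B y x" and psd: "\<forall>x. 0 \<le> B x x"
    and yy: "B y y > 0"
  shows "(B x y)^2 \<le> B x x * B y y"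
proof -
  define t where "t = B x y / B y y"
  have "0 \<le> B (x - t *\<^sub>R y) (x - t *\<^sub>R y)" using psd by auto
  also have "\<dots> = B x x - t * B x y - t * B y x + t*t* B y y"
    using bl by (simp add: bilinear_lsub bilinear_rsub bilinear_lmul bilinear_rmul algebra_simps)
  also have "\<dots> = B x x - (B x y)^2 / B y y" unfolding t_def using yy sym[rule_format, of y x]
    by (simp add: field_simps power2_eq_square)
  finally have "(B x y)^2 / B y y \<le> B x x" by simp
  thus ?thesis using yy by (simp add: divide_le_eq)
qed

lemma span_rad:
  fixes B :: "'a::real_vector \<Rightarrow> 'a \<Rightarrow> real"
  assumes bl: "bilinear B" and h: "\<And>x y. x \<in> X \<Longrightarrow> B x y = 0"
    and v: "v \<in> span X"
  shows "B v y = 0"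
  using v
proof (induction rule: span_induct_alt)
  case base then show ?case using bl by (simp add: bilinear_lzero)
next
  case (step c x z) then show ?case using bl h by (simp add: bilinear_ladd bilinear_lmul)
qed

lemma addgen_span: "x \<in> addgen X \<Longrightarrow> x \<in> span X"
  by (induction rule: addgen.induct) (auto intro: span_base span_add span_neg span_zero)

lemma semilattice_unf:
  assumes "semilattice S"
  obtains \<tau>s where "finite \<tau>s" "0 \<in> \<tau>s"
    "S = (\<Union>t\<in>\<tau>s. {t + (x + x) | x. x \<in> addgen S})"
proof -
  from assms obtain \<tau>s where A: "finite \<tau>s \<and> 0 \<in> \<tau>s \<and>
      (\<forall>t1\<in>\<tau>s. \<forall>t2\<in>\<tau>s. t1 - t2 \<in> {x + x | x. x \<in> addgen S} \<longrightarrow> t1 = t2) \<and>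
      S = (\<Union>t\<in>\<tau>s. {t + (x + x) | x. x \<in> addgen S})" unfolding semilattice_def by (rule exE)
  show ?thesis
    by (rule that[OF A[THEN conjunct1] A[THEN conjunct2, THEN conjunct1] A[THEN conjunct2, THEN conjunct2, THEN conjunct2]])
qed

lemma semilattice_neg:
  assumes "semilattice S" "s \<in> S" shows "- s \<in> S"
proof -
  from assms(1) obtain \<tau>s where t: "finite \<tau>s" "0 \<in> \<tau>s"
    and t3: "S = (\<Union>t\<in>\<tau>s. {t + (x + x) | x. x \<in> addgen S})" by (rule semilattice_unf)
  have "s \<in> (\<Union>t\<in>\<tau>s. {t + (x + x) | x. x \<in> addgen S})" using assms(2) by (subst (asm) t3)
  then obtain t x where tx: "t \<in> \<tau>s" "x \<in> addgen S" "s = t + (x + x)" by blast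
  have "t + (0 + 0) \<in> (\<Union>t\<in>\<tau>s. {t + (x + x) | x. x \<in> addgen S})" using tx(1) addgen.zero[of S] by blast
  hence "t \<in> S" by (subst t3) simp
  hence "-t - x \<in> addgen S" using tx(2) by (metis addgen.add addgen.base addgen.neg diff_conv_add_uminus)
  moreover have "- s = t + ((-t-x) + (-t-x))" using tx(3) by (simp add: algebra_simps)
  ultimately have "- s \<in> (\<Union>t\<in>\<tau>s. {t + (x + x) | x. x \<in> addgen S})" using tx(1) by blast
  thus ?thesis by (subst t3)
qed

lemma semilattice_zero:
  assumes "semilattice S" shows "0 \<in> S"
proof -
  from assms(1) obtain \<tau>s where t: "0 \<in> \<tau>s"
    and t3: "S = (\<Union>t\<in>\<tau>s. {t + (x + x) | x. x \<in> addgen S})" by (rule semilattice_unf)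
  have "0 + (0 + 0) \<in> (\<Union>t\<in>\<tau>s. {t + (x + x) | x. x \<in> addgen S})" using t addgen.zero[of S] by blast
  thus ?thesis by (subst t3) simp
qed
lemma msum_iff: "x \<in> msum A B \<longleftrightarrow> (\<exists>a\<in>A. \<exists>b\<in>B. x = a + b)"
  unfolding msum_def by blast

theorem lemma7p4:
  fixes B :: "'a::euclidean_space \<Rightarrow> 'a \<Rightarrow> real"
    and R Rd S L U :: "'a set"
  assumes "ears B R"
    and "ears_structure B R Rd S L"
    and "is_subgroup U" and "U \<subseteq> addgen (isot B R)"
  shows "msum Rd U \<inter> nonisot B R = msum Rd (S \<inter> U) \<inter> nonisot B R
    \<and> msum Rd U \<inter> nonisot B R = tR_x B R (msum Rd U \<inter> nonisot B R)
    \<and> tR_0 B R (msum Rd U \<inter> nonisot B R) = msum (S \<inter> U) (S \<inter> U)"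
proof -
  note ED = ears_D[OF assms(1)]
  have bl: "bilinear B" by (rule ED(1))
  have sym: "\<forall>x y. B x y = B y x" by (rule ED(2))
  have psd: "\<forall>x. 0 \<le> B x x" by (rule ED(3))
  have zR: "0 \<in> R" by (rule ED(4))
  note strings = ED(5)
  note noniso = ED(6)
  have conn: "\<And>R1 R2. R1 \<union> R2 = nonisot B R \<Longrightarrow> R1 \<inter> R2 = {} \<Longrightarrow>
         (\<forall>x\<in>R1. \<forall>y\<in>R2. B x y = 0) \<Longrightarrow> R1 = {} \<or> R2 = {}"
    using ED(7) by blast
  note ESD = ears_structure_D[OF assms(2)]
  note frs = ESD(1) and RdR = ESD(2) and uniq = ESD(3) and slS = ESD(4) and slL = ESD(5)
    and SV = ESD(6) and LV = ESD(7) and Req = ESD(8) and isoeq = ESD(9)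
  note FD = frs_D[OF frs]
  note finRd = FD(1) and pos = FD(2)
  have refl: "\<forall>a\<in>Rd - {0}. \<forall>b\<in>Rd. b - (2 * B b a / B a a) *\<^sub>R a \<in> Rd"
    using FD(3) by blast
  define V where "V = V0 B R"
  define Sh where "Sh = short_roots B Rd"
  define Lg where "Lg = long_roots B Rd"
  define N where "N = nonisot B R"
  have mem_N: "\<And>x. x \<in> N \<longleftrightarrow> x \<in> R \<and> B x x \<noteq> 0" unfolding N_def nonisot_def by blast
  have mem_iso: "\<And>x. x \<in> isot B R \<longleftrightarrow> x \<in> R \<and> B x x = 0"
    unfolding isot_def nonisot_def by blast
  have rad: "\<And>v y. v \<in> V \<Longrightarrow> B v y = 0"
  proof -
    fix v y assume "v \<in> V"
    then have vs: "v \<in> span (isot B R)" unfolding V_def V0_def .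
    show "B v y = 0"
      by (rule span_rad[OF bl _ vs]) (use psd_zero[OF bl sym psd] mem_iso in blast)
  qed
  have rad2: "\<And>v y. v \<in> V \<Longrightarrow> B y v = 0" using rad sym by metis
  have subV: "subspace V" unfolding V_def V0_def by (rule subspace_span)
  have Vadd: "\<And>x y. x \<in> V \<Longrightarrow> y \<in> V \<Longrightarrow> x + y \<in> V" using subV by (simp add: subspace_add)
  have Vdiff: "\<And>x y. x \<in> V \<Longrightarrow> y \<in> V \<Longrightarrow> x - y \<in> V" using subV by (simp add: subspace_diff)
  have Vneg: "\<And>x. x \<in> V \<Longrightarrow> - x \<in> V" using subV by (simp add: subspace_neg)
  have Vscale: "\<And>c x. x \<in> V \<Longrightarrow> c *\<^sub>R x \<in> V" using subV by (simp add: subspace_scale)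
  have V0: "0 \<in> V" using subV by (simp add: subspace_0)
  have Bsh: "\<And>a b s t. s \<in> V \<Longrightarrow> t \<in> V \<Longrightarrow> B (a + s) (b + t) = B a b"
    using bl rad rad2 by (simp add: bilinear_ladd bilinear_radd)
  have VRd: "\<And>y. y \<in> V \<Longrightarrow> y \<in> span Rd \<Longrightarrow> y = 0" using pos rad by fastforce
  have uniq': "\<And>x a b. x \<in> R \<Longrightarrow> a \<in> Rd \<Longrightarrow> b \<in> Rd \<Longrightarrow> x - a \<in> V \<Longrightarrow> x - b \<in> V \<Longrightarrow> a = b"
    using uniq unfolding V_def by blast
  have ShRd: "Sh \<subseteq> Rd - {0}" unfolding Sh_def short_roots_def by blast
  have LgRd: "Lg \<subseteq> Rd - {0}" unfolding Lg_def long_roots_def short_roots_def by blast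
  have ShLg: "Sh \<inter> Lg = {}" unfolding Sh_def Lg_def long_roots_def by blast
  have Rdpos: "\<And>a. a \<in> Rd - {0} \<Longrightarrow> B a a > 0" using pos span_base by blast
  have UV: "U \<subseteq> V" using assms(4) addgen_span unfolding V_def V0_def by blast
  have SV': "S \<subseteq> V" and LV': "L \<subseteq> V" using SV LV V_def by auto
  have Sneg: "\<And>s. s \<in> S \<Longrightarrow> - s \<in> S" using semilattice_neg[OF slS] .
  have S0: "0 \<in> S" using semilattice_zero[OF slS] .
  have L0: "0 \<in> L" using semilattice_zero[OF slL] .
  have U0: "0 \<in> U" and Uadd: "\<And>x y. x \<in> U \<Longrightarrow> y \<in> U \<Longrightarrow> x + y \<in> U"
    and Uneg: "\<And>x. x \<in> U \<Longrightarrow> - x \<in> U" using assms(3) unfolding is_subgroup_def by blast+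
  have inR: "\<And>x. x \<in> msum S S \<or> x \<in> msum Sh S \<or> x \<in> msum Lg L \<Longrightarrow> x \<in> R"
    unfolding Sh_def Lg_def by (subst Req) blast
  have RinR: "\<And>x. x \<in> R \<Longrightarrow> x \<in> msum S S \<or> x \<in> msum Sh S \<or> x \<in> msum Lg L"
  proof -
    fix x assume "x \<in> R"
    then have "x \<in> msum S S \<union> msum (short_roots B Rd) S \<union> msum (long_roots B Rd) L"
      by (subst (asm) Req)
    then show "x \<in> msum S S \<or> x \<in> msum Sh S \<or> x \<in> msum Lg L" unfolding Sh_def Lg_def by blast
  qed
  have Nchar: "\<And>x. x \<in> N \<Longrightarrow> (\<exists>g\<in>Sh. \<exists>s\<in>S. x = g + s) \<or> (\<exists>g\<in>Lg. \<exists>l\<in>L. x = g + l)"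
  proof -
    fix x assume xN: "x \<in> N"
    then have "x \<in> R" "B x x \<noteq> 0" using mem_N by auto
    then have "x \<notin> msum S S" using isoeq mem_iso by blast
    then show "(\<exists>g\<in>Sh. \<exists>s\<in>S. x = g + s) \<or> (\<exists>g\<in>Lg. \<exists>l\<in>L. x = g + l)"
      using RinR[OF \<open>x \<in> R\<close>] unfolding msum_iff by blast
  qed
  have ShN: "\<And>g s. g \<in> Sh \<Longrightarrow> s \<in> S \<Longrightarrow> g + s \<in> N"
  proof -
    fix g s assume "g \<in> Sh" "s \<in> S"
    then have "g + s \<in> R" using inR unfolding msum_iff by blast
    moreover have "B (g + s) (g + s) = B g g" using Bsh[of s s g g] \<open>s \<in> S\<close> SV' by auto
    moreover have "B g g > 0" using Rdpos ShRd \<open>g \<in> Sh\<close> by blast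
    ultimately show "g + s \<in> N" using mem_N by auto
  qed
  have LgN: "\<And>g s. g \<in> Lg \<Longrightarrow> s \<in> L \<Longrightarrow> g + s \<in> N"
  proof -
    fix g s assume "g \<in> Lg" "s \<in> L"
    then have "g + s \<in> R" using inR unfolding msum_iff by blast
    moreover have "B (g + s) (g + s) = B g g" using Bsh[of s s g g] \<open>s \<in> L\<close> LV' by auto
    moreover have "B g g > 0" using Rdpos LgRd \<open>g \<in> Lg\<close> by blast
    ultimately show "g + s \<in> N" using mem_N by auto
  qed
  have Sh_ne: "Sh \<noteq> {}"
  proof -
    have "B 0 0 = 0" using bl by (simp add: bilinear_lzero)
    then have "0 \<in> isot B R" using zR mem_iso by blast
    then obtain b where "b \<in> N" using noniso N_def by blast
    then obtain g where g: "g \<in> Rd - {0}" using Nchar ShRd LgRd by blast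
    define m where "m = Min ((\<lambda>a. B a a) ` (Rd - {0}))"
    have "m \<in> (\<lambda>a. B a a) ` (Rd - {0})" unfolding m_def using finRd g by (intro Min_in) auto
    then obtain a where a: "a \<in> Rd - {0}" "B a a = m" by blast
    have "\<forall>b\<in>Rd - {0}. B a a \<le> B b b" unfolding a(2) m_def using finRd by (auto intro: Min_le)
    then have "a \<in> Sh" unfolding Sh_def short_roots_def using a by blast
    then show ?thesis by blast
  qed
  have LS: "Lg \<noteq> {} \<Longrightarrow> L \<subseteq> S"
  proof
    assume Lne: "Lg \<noteq> {}"
    fix l assume lL: "l \<in> L"
    obtain \<alpha> \<beta> where \<alpha>: "\<alpha> \<in> Lg" and \<beta>: "\<beta> \<in> Sh" and nz: "B \<beta> \<alpha> \<noteq> 0"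
    proof (rule ccontr)
      assume "\<not> thesis"
      then have orth: "\<And>a b. a \<in> Lg \<Longrightarrow> b \<in> Sh \<Longrightarrow> B b a = 0" using that by blast
      define R1 where "R1 = {x \<in> N. \<exists>g\<in>Sh. \<exists>s\<in>S. x = g + s}"
      define R2 where "R2 = {x \<in> N. \<exists>g\<in>Lg. \<exists>l\<in>L. x = g + l}"
      have "R1 \<union> R2 = nonisot B R" unfolding R1_def R2_def N_def[symmetric] using Nchar by blast
      moreover have "R1 \<inter> R2 = {}"
      proof (rule ccontr)
        assume "R1 \<inter> R2 \<noteq> {}"
        then obtain x g s g' l' where x: "x \<in> N" "g \<in> Sh" "s \<in> S" "x = g + s"
          "g' \<in> Lg" "l' \<in> L" "x = g' + l'" unfolding R1_def R2_def by blast
        have "x \<in> R" using x(1) mem_N by blast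
        moreover have "x - g \<in> V" using x(3,4) SV' by auto
        moreover have "x - g' \<in> V" using x(6,7) LV' by (simp add: subset_iff)
        ultimately have "g = g'" using uniq' x ShRd LgRd by blast
        then show False using x ShLg by blast
      qed
      moreover have "\<forall>x\<in>R1. \<forall>y\<in>R2. B x y = 0"
      proof (intro ballI)
        fix x y assume "x \<in> R1" "y \<in> R2"
        then obtain g s g' l' where "g \<in> Sh" "s \<in> S" "x = g + s"
          "g' \<in> Lg" "l' \<in> L" "y = g' + l'" unfolding R1_def R2_def by blast
        then show "B x y = 0" using Bsh[of s l' g g'] SV' LV' orth by auto
      qed
      ultimately have "R1 = {} \<or> R2 = {}" by (rule conn)
      moreover obtain b0 where "b0 \<in> Sh" using Sh_ne by blast
      then have "b0 + 0 \<in> R1" unfolding R1_def using ShN S0 by blast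
      moreover obtain a0 where "a0 \<in> Lg" using Lne by blast
      then have "a0 + 0 \<in> R2" unfolding R2_def using LgN L0 by blast
      ultimately show False by blast
    qed
    have lV: "l \<in> V" using lL LV' by blast
    define a where "a = \<alpha> + l"
    have aN: "a \<in> N" unfolding a_def using LgN \<alpha> lL .
    have \<beta>R: "\<beta> \<in> R" using \<beta> ShRd RdR by blast
    have Baa: "B a a = B \<alpha> \<alpha>" unfolding a_def using Bsh[of l l \<alpha> \<alpha>] lV by simp
    have Bba: "B \<beta> a = B \<beta> \<alpha>" unfolding a_def using Bsh[of 0 l \<beta> \<alpha>] lV V0 by simp
    obtain d u :: nat where du: "{k::int. \<beta> + of_int k *\<^sub>R a \<in> R} = {- int d .. int u}"
      "2 * B \<beta> a / B a a = real d - real u"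
      using strings aN \<beta>R unfolding N_def by blast
    define c where "c = 2 * B \<beta> \<alpha> / B \<alpha> \<alpha>"
    have cdu: "c = real d - real u" using du(2) Baa Bba c_def by simp
    have "int u - int d \<in> {- int d .. int u}" by simp
    then have "\<beta> + of_int (int u - int d) *\<^sub>R a \<in> R" using du(1) by blast
    moreover have "of_int (int u - int d) = - c" using cdu by simp
    ultimately have yR: "\<beta> - c *\<^sub>R a \<in> R" by simp
    have \<alpha>pos: "B \<alpha> \<alpha> > 0" using Rdpos LgRd \<alpha> by blast
    have \<beta>pos: "B \<beta> \<beta> > 0" using Rdpos ShRd \<beta> by blast
    have "B \<beta> \<beta> < B \<alpha> \<alpha>"
    proof -
      have "\<alpha> \<notin> Sh" using \<alpha> ShLg by blast
      then obtain b where b: "b \<in> Rd - {0}" "B \<alpha> \<alpha> > B b b"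
        using \<alpha> LgRd unfolding Sh_def short_roots_def by force
      have "B \<beta> \<beta> \<le> B b b" using \<beta> b unfolding Sh_def short_roots_def by blast
      then show ?thesis using b by linarith
    qed
    have cs: "(B \<beta> \<alpha>)^2 \<le> B \<beta> \<beta> * B \<alpha> \<alpha>" by (rule cs_ineq[OF bl sym psd \<alpha>pos])
    have "c^2 < 4"
    proof -
      have "c^2 = 4 * (B \<beta> \<alpha>)^2 / (B \<alpha> \<alpha> * B \<alpha> \<alpha>)" unfolding c_def by (simp add: power2_eq_square)
      also have "\<dots> \<le> 4 * (B \<beta> \<beta> * B \<alpha> \<alpha>) / (B \<alpha> \<alpha> * B \<alpha> \<alpha>)"
        using cs \<alpha>pos by (intro divide_right_mono) auto
      also have "\<dots> = 4 * B \<beta> \<beta> / B \<alpha> \<alpha>" using \<alpha>pos by simp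
      also have "\<dots> < 4" using \<open>B \<beta> \<beta> < B \<alpha> \<alpha>\<close> \<alpha>pos by (simp add: divide_less_eq)
      finally show ?thesis .
    qed
    have "c \<noteq> 0" unfolding c_def using nz \<alpha>pos by simp
    have cpm: "c = 1 \<or> c = -1"
    proof -
      define k where "k = int d - int u"
      have ck: "c = of_int k" unfolding k_def using cdu by simp
      have "k \<noteq> 0" using \<open>c \<noteq> 0\<close> ck by simp
      have "(of_int (k^2) :: real) < 4" using \<open>c^2 < 4\<close> ck by simp
      then have "k^2 < 4" by (metis of_int_less_iff of_int_numeral)
      then have k4: "k*k < 4" by (simp add: power2_eq_square)
      have "k = 1 \<or> k = -1"
      proof (rule ccontr)
        assume "\<not> (k = 1 \<or> k = -1)"
        then have "k \<ge> 2 \<or> -k \<ge> 2" using \<open>k \<noteq> 0\<close> by arith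
        then have "k*k \<ge> 2*2"
        proof
          assume "k \<ge> 2" then show ?thesis using mult_mono[of 2 k 2 k] by simp
        next
          assume "-k \<ge> 2" then have "(-k)*(-k) \<ge> 2*2" using mult_mono[of 2 "-k" 2 "-k"] by simp
          then show ?thesis by simp
        qed
        then show False using k4 by simp
      qed
      then show ?thesis using ck by auto
    qed
    define g where "g = \<beta> - c *\<^sub>R \<alpha>"
    have gRd: "g \<in> Rd" unfolding g_def c_def using refl \<alpha> \<beta> LgRd ShRd by blast
    have Bgg: "B g g = B \<beta> \<beta>"
    proof -
      have h2: "2 * B \<beta> \<alpha> = c * B \<alpha> \<alpha>" unfolding c_def using \<alpha>pos by simp
      have "B g g = B \<beta> \<beta> - c * B \<beta> \<alpha> - c * B \<alpha> \<beta> + c * c * B \<alpha> \<alpha>"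
        unfolding g_def using bl by (simp add: bilinear_lsub bilinear_rsub bilinear_lmul bilinear_rmul algebra_simps)
      also have "\<dots> = B \<beta> \<beta> - c * (2 * B \<beta> \<alpha>) + c * (c * B \<alpha> \<alpha>)"
        using sym[rule_format, of \<alpha> \<beta>] by (simp add: algebra_simps)
      also have "\<dots> = B \<beta> \<beta>" unfolding h2 by simp
      finally show ?thesis .
    qed
    have gSh: "g \<in> Sh"
    proof -
      have "g \<noteq> 0" using Bgg \<beta>pos bl by (auto simp: bilinear_lzero)
      moreover have "\<forall>b\<in>Rd - {0}. B g g \<le> B b b" using Bgg \<beta> unfolding Sh_def short_roots_def by simp
      ultimately show ?thesis using gRd unfolding Sh_def short_roots_def by blast
    qed
    have yeq: "\<beta> - c *\<^sub>R a = g + (- c) *\<^sub>R l" unfolding g_def a_def by (simp add: algebra_simps)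
    have clV: "(- c) *\<^sub>R l \<in> V" using Vscale lV by blast
    have "B (\<beta> - c *\<^sub>R a) (\<beta> - c *\<^sub>R a) = B g g" unfolding yeq using Bsh[OF clV clV] by simp
    then have yN: "\<beta> - c *\<^sub>R a \<in> N" using mem_N yR Bgg \<beta>pos by simp
    have ygV: "(\<beta> - c *\<^sub>R a) - g \<in> V" using yeq clV by simp
    from Nchar[OF yN] show "l \<in> S"
    proof
      assume "\<exists>g'\<in>Sh. \<exists>s\<in>S. \<beta> - c *\<^sub>R a = g' + s"
      then obtain g' s where gs: "g' \<in> Sh" "s \<in> S" "\<beta> - c *\<^sub>R a = g' + s" by blast
      have "(\<beta> - c *\<^sub>R a) - g' \<in> V" using gs SV' by auto
      then have "g' = g" using uniq'[OF yR _ gRd _ ygV] gs ShRd by blast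
      then have "s = (- c) *\<^sub>R l" using gs yeq by simp
      then show "l \<in> S" using cpm gs(2) Sneg[of "- l"] by auto
    next
      assume "\<exists>g'\<in>Lg. \<exists>s\<in>L. \<beta> - c *\<^sub>R a = g' + s"
      then obtain g' s where gs: "g' \<in> Lg" "s \<in> L" "\<beta> - c *\<^sub>R a = g' + s" by blast
      have "(\<beta> - c *\<^sub>R a) - g' \<in> V" using gs LV' by auto
      then have "g' = g" using uniq'[OF yR _ gRd _ ygV] gs LgRd by blast
      then show "l \<in> S" using gs gSh ShLg by blast
    qed
  qed
  define T where "T = msum Rd U \<inter> N"
  have TRd: "\<And>x. x \<in> T \<Longrightarrow> \<exists>a\<in>Rd. \<exists>s\<in>S \<inter> U. x = a + s"
  proof -
    fix x assume "x \<in> T"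
    then obtain a u where au: "a \<in> Rd" "u \<in> U" "x = a + u" "x \<in> N" unfolding T_def Int_iff msum_iff by blast
    have xR: "x \<in> R" using au mem_N by blast
    have xa: "x - a \<in> V" using au UV by auto
    from Nchar[OF au(4)] show "\<exists>a\<in>Rd. \<exists>s\<in>S \<inter> U. x = a + s"
    proof
      assume "\<exists>g\<in>Sh. \<exists>s\<in>S. x = g + s"
      then obtain g s where gs: "g \<in> Sh" "s \<in> S" "x = g + s" by blast
      have "x - g \<in> V" using gs SV' by auto
      then have "a = g" using uniq'[OF xR au(1) _ xa] gs ShRd by blast
      then have "u = s" using gs au by simp
      then show ?thesis using au gs by blast
    next
      assume "\<exists>g\<in>Lg. \<exists>s\<in>L. x = g + s"
      then obtain g s where gs: "g \<in> Lg" "s \<in> L" "x = g + s" by blast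
      have "x - g \<in> V" using gs LV' by auto
      then have "a = g" using uniq'[OF xR au(1) _ xa] gs LgRd by blast
      then have "u = s" using gs au by simp
      moreover have "s \<in> S" using LS gs by blast
      ultimately show ?thesis using au gs by blast
    qed
  qed
  have C1: "T = msum Rd (S \<inter> U) \<inter> N"
  proof (intro equalityI subsetI)
    fix x assume xT: "x \<in> T"
    then obtain a s where as: "a \<in> Rd" "s \<in> S \<inter> U" "x = a + s" using TRd by blast
    have "x \<in> N" using xT unfolding T_def by blast
    moreover have "x \<in> msum Rd (S \<inter> U)" unfolding msum_iff using as by blast
    ultimately show "x \<in> msum Rd (S \<inter> U) \<inter> N" by blast
  next
    fix x assume "x \<in> msum Rd (S \<inter> U) \<inter> N"
    then obtain a s where as: "a \<in> Rd" "s \<in> S \<inter> U" "x = a + s" "x \<in> N"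
      unfolding Int_iff msum_iff by blast
    have "x \<in> msum Rd U" unfolding msum_iff using as by blast
    then show "x \<in> T" unfolding T_def using as by blast
  qed
  have gen: "\<And>x. x \<in> addgen T \<Longrightarrow> \<exists>w\<in>span Rd. \<exists>u\<in>U. x = w + u"
  proof -
    fix x assume "x \<in> addgen T"
    then show "\<exists>w\<in>span Rd. \<exists>u\<in>U. x = w + u"
    proof (induction rule: addgen.induct)
      case zero
      have "(0::'a) = 0 + 0" by simp
      then show ?case using U0 span_zero by blast
    next
      case (base x)
      then have "x \<in> msum Rd U" unfolding T_def by blast
      then obtain a u where "a \<in> Rd" "u \<in> U" "x = a + u" unfolding msum_iff by blast
      then show ?case using span_base by blast
    next
      case (add x y)
      then obtain w1 u1 w2 u2 where h: "w1 \<in> span Rd" "u1 \<in> U" "x = w1 + u1"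
        "w2 \<in> span Rd" "u2 \<in> U" "y = w2 + u2" by blast
      have "x + y = (w1 + w2) + (u1 + u2)" using h by (simp add: algebra_simps)
      moreover have "w1 + w2 \<in> span Rd" using h span_add by blast
      moreover have "u1 + u2 \<in> U" using h Uadd by blast
      ultimately show ?case by blast
    next
      case (neg x)
      then obtain w1 u1 where h: "w1 \<in> span Rd" "u1 \<in> U" "x = w1 + u1" by blast
      have "- x = (- w1) + (- u1)" using h by simp
      moreover have "- w1 \<in> span Rd" using h span_neg by blast
      moreover have "- u1 \<in> U" using h Uneg by blast
      ultimately show ?case by blast
    qed
  qed
  have tRx: "tR_x B R T = T"
  proof
    show "T \<subseteq> tR_x B R T" unfolding tR_x_def N_def[symmetric] T_def using addgen.base by blast
    show "tR_x B R T \<subseteq> T"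
    proof
      fix x assume "x \<in> tR_x B R T"
      then have xg: "x \<in> addgen T" and xN: "x \<in> N" unfolding tR_x_def N_def by auto
      obtain w u where wu: "w \<in> span Rd" "u \<in> U" "x = w + u" using gen[OF xg] by blast
      have xR: "x \<in> R" using xN mem_N by blast
      then obtain g where g: "g \<in> Rd" "x - g \<in> V" using uniq unfolding V_def by blast
      have "w - g = (x - g) - u" using wu by simp
      moreover have "u \<in> V" using UV wu by blast
      ultimately have "w - g \<in> V" using g(2) Vdiff by metis
      moreover have "w - g \<in> span Rd" using wu g span_base span_diff by blast
      ultimately have "w - g = 0" using VRd by blast
      then have "w = g" by simp
      then show "x \<in> T" unfolding T_def Int_iff msum_iff using wu g xN by blast
    qed
  qed
  have C3: "tR_0 B R T = msum (S \<inter> U) (S \<inter> U)"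
  proof
    show "tR_0 B R T \<subseteq> msum (S \<inter> U) (S \<inter> U)"
    proof
      fix z assume "z \<in> tR_0 B R T"
      then obtain x y where xy: "z \<in> V" "x \<in> T" "y \<in> T" "z = x - y"
        unfolding tR_0_def tRx V_def by blast
      obtain a s where as: "a \<in> Rd" "s \<in> S \<inter> U" "x = a + s" using TRd xy by blast
      obtain b t where bt: "b \<in> Rd" "t \<in> S \<inter> U" "y = b + t" using TRd xy by blast
      have abz: "a - b = z - s + t" using xy as bt by (simp add: algebra_simps)
      have "s \<in> V" "t \<in> V" using as bt SV' by auto
      then have "z - s + t \<in> V" using Vadd Vdiff xy(1) by blast
      then have "a - b \<in> V" unfolding abz .
      moreover have "a - b \<in> span Rd" using as bt span_base span_diff by blast
      ultimately have "a - b = 0" using VRd by blast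
      then have "a = b" by simp
      then have "z = s + (- t)" using xy as bt by simp
      moreover have "- t \<in> S \<inter> U" using bt Sneg Uneg by blast
      ultimately show "z \<in> msum (S \<inter> U) (S \<inter> U)" unfolding msum_iff using as by blast
    qed
    show "msum (S \<inter> U) (S \<inter> U) \<subseteq> tR_0 B R T"
    proof
      fix z assume "z \<in> msum (S \<inter> U) (S \<inter> U)"
      then obtain s t where st: "s \<in> S \<inter> U" "t \<in> S \<inter> U" "z = s + t" unfolding msum_iff by blast
      obtain g where g: "g \<in> Sh" using Sh_ne by blast
      have x: "g + s \<in> T" unfolding T_def Int_iff msum_iff using ShN g st ShRd by blast
      have "- t \<in> S" "- t \<in> U" using st Sneg Uneg by auto
      then have y: "g + (- t) \<in> T" unfolding T_def Int_iff msum_iff using ShN g ShRd by blast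
      have "z = (g + s) - (g + (- t))" using st by simp
      moreover have "z \<in> V" using st SV' Vadd by auto
      ultimately show "z \<in> tR_0 B R T" unfolding tR_0_def tRx V_def using x y by blast
    qed
  qed
  show ?thesis using C1 tRx C3 unfolding T_def N_def by simp
qed
end
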